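(* Let $\mathbf n\ge 2$, let $A=B=C$ be the space of $\mathbf n\times\mathbf n$ complex matrices, and let $M_{\langle\mathbf n\rangle}\in A\otimes B\otimes C$ be the matrix multiplication tensor. Let $r=2\mathbf n^2-2$ and suppose that $$M_{\langle\mathbf n\rangle}=\sum_{\substack{i,j,k\ge 1\\ i+j+k\le r+2}} a_i\otimes b_j\otimes c_k$$ for some vectors $a_1,\dots,a_r\in A$, $b_1,\dots,b_r\in B$, $c_1,\dots,c_r\in C$ (so that $M_{\langle\mathbf n\rangle}$ lies in the open bud $\mathfrak b^\circ_r(Seg(\mathbb PA\times\mathbb PB\times\mathbb PC),[a_1\otimes b_1\otimes c_1])$; here $[a_1\otimes b_1\otimes c_1]$ is assumed to lie in $\mathcal K$). Then: (1) no two of the three sets $\{a_1,\dots,a_{\mathbf n^2}\}$, $\{b_1,\dots,b_{\mathbf n^2}\}$, $\{c_1,\dots,c_{\mathbf n^2}\}$ can both be linearly independent; and (2) each of $\dim\langle a_1,\dots,a_{2\mathbf n^2-\mathbf n-1}\rangle$, $\dim\langle b_1,\dots,b_{2\mathbf n^2-\mathbf n-1}\rangle$, $\dim\langle c_1,\dots,c_{2\mathbf n^2-\mathbf n-1}\rangle$ is at least $\mathbf n^2$.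
   Context: With $U,V,W\cong\mathbb C^{\mathbf n}$, $A=U^*\otimes V$, $B=V^*\otimes W$, $C=W^*\otimes U$, and $M_{\langle\mathbf n\rangle}=\mathrm{Id}_U\otimes\mathrm{Id}_V\otimes\mathrm{Id}_W$ (factors reordered); in bases, $M_{\langle\mathbf n\rangle}=\sum_{i,j,k=1}^{\mathbf n}x^i_j\otimes y^j_k\otimes z^k_i$. $\mathcal K$ is the set of $[\mu\otimes v\otimes\nu\otimes w\otimes\omega\otimes u]$ with $a=\mu\otimes v$, $b=\nu\otimes w$, $c=\omega\otimes u$ and $\mu(u)=\omega(w)=\nu(v)=0$. *)

theory Defs
  imports Complex_Main "HOL-Library.Function_Algebras" "HOL-Library.Cardinality"
begin

text \<open>Vectors of the spaces A = B = C are n x n complex matrices, encoded as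
  functions of type ('n \<times> 'n \<Rightarrow> complex) with CARD('n) = n.
  A matrix a has entry a (i,j) = coefficient of the basis vector x^i_j.\<close>

definition fscale :: "complex \<Rightarrow> ('a \<Rightarrow> complex) \<Rightarrow> ('a \<Rightarrow> complex)" where
  "fscale c f = (\<lambda>x. c * f x)"

interpretation fsp: vector_space "fscale :: complex \<Rightarrow> ('a \<Rightarrow> complex) \<Rightarrow> _"
  by unfold_locales (auto simp: fscale_def fun_eq_iff algebra_simps)

definition lin_indep_family :: "nat set \<Rightarrow> (nat \<Rightarrow> 'a \<Rightarrow> complex) \<Rightarrow> bool" where
  "lin_indep_family S f \<longleftrightarrow> inj_on f S \<and> fsp.independent (f ` S)"

text \<open>The matrix multiplication tensor M = sum x^i_j \<otimes> y^j_k \<otimes> z^k_i, as a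
  function of the three (pair) indices.\<close>
definition matmul_tensor :: "('n \<times> 'n) \<Rightarrow> ('n \<times> 'n) \<Rightarrow> ('n \<times> 'n) \<Rightarrow> complex" where
  "matmul_tensor x y z = (if snd x = fst y \<and> snd y = fst z \<and> snd z = fst x then 1 else 0)"

text \<open>[a \<otimes> b \<otimes> c] lies in K: a = \<mu>\<otimes>v, b = \<nu>\<otimes>w, c = \<omega>\<otimes>u (all factors nonzero,
  so that the point is defined) with \<mu>(u) = \<omega>(w) = \<nu>(v) = 0.\<close>
definition in_K :: "('n \<times> 'n \<Rightarrow> complex) \<Rightarrow> ('n \<times> 'n \<Rightarrow> complex) \<Rightarrow> ('n \<times> 'n \<Rightarrow> complex) \<Rightarrow> bool" where
  "in_K a b c \<longleftrightarrow> (\<exists>\<mu> v \<nu> w \<omega> u :: 'n \<Rightarrow> complex.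
     \<mu> \<noteq> 0 \<and> v \<noteq> 0 \<and> \<nu> \<noteq> 0 \<and> w \<noteq> 0 \<and> \<omega> \<noteq> 0 \<and> u \<noteq> 0 \<and>
     a = (\<lambda>(i,j). \<mu> i * v j) \<and> b = (\<lambda>(j,k). \<nu> j * w k) \<and> c = (\<lambda>(k,i). \<omega> k * u i) \<and>
     (\<Sum>i\<in>UNIV. \<mu> i * u i) = 0 \<and> (\<Sum>k\<in>UNIV. \<omega> k * w k) = 0 \<and> (\<Sum>j\<in>UNIV. \<nu> j * v j) = 0)"

end

theory Submission
  imports Defs
begin

definition pair :: "('a::finite \<Rightarrow> complex) \<Rightarrow> ('a \<Rightarrow> complex) \<Rightarrow> complex" where
  "pair \<xi> f = (\<Sum>x\<in>UNIV. \<xi> x * f x)"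

definition delta :: "'a \<Rightarrow> 'a \<Rightarrow> complex" where
  "delta x0 = (\<lambda>x. if x = x0 then 1 else 0)"

lemma sum_delta_r: fixes x :: "'a::finite" shows "(\<Sum>y\<in>UNIV. f y * (if y = x then 1 else 0)) = (f x :: complex)"
  "(\<Sum>y\<in>UNIV. f y * (if x = y then 1 else 0)) = (f x :: complex)"
  by (simp_all add: if_distrib[of "\<lambda>t. f _ * t"] sum.delta sum.delta' cong: if_cong)

lemma fsum_apply: "(\<Sum>i\<in>A. f i) x = (\<Sum>i\<in>A. f i x)"
  by (induct A rule: infinite_finite_induct) auto

lemma indep_family:
  fixes g :: "'t \<Rightarrow> ('a \<Rightarrow> complex)" and w :: "'t \<Rightarrow> 'a"
  assumes nz: "\<And>t. g t (w t) \<noteq> 0" and z: "\<And>t t'. t \<noteq> t' \<Longrightarrow> g t (w t') = 0"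
  shows "fsp.independent (g ` T)" "inj g"
proof -
  show inj: "inj g"
    by (metis injI nz z)
  show "fsp.independent (g ` T)"
    unfolding fsp.independent_explicit_finite_subsets
  proof (intro allI impI ballI)
    fix S u v assume S: "S \<subseteq> g ` T" "finite S" and sum0: "(\<Sum>v\<in>S. fscale (u v) v) = 0"
      and v: "v \<in> S"
    then obtain t where t: "v = g t" by blast
    have "(\<Sum>v\<in>S. fscale (u v) v) (w t) = 0" using sum0 by simp
    hence "(\<Sum>v'\<in>S. u v' * v' (w t)) = 0" by (simp add: fsum_apply fscale_def)
    moreover have "(\<Sum>v'\<in>S. u v' * v' (w t)) = u v * v (w t)"
    proof -
      have "(\<Sum>v'\<in>S - {v}. u v' * v' (w t)) = 0"
      proof (rule sum.neutral, rule ballI)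
        fix v' assume "v' \<in> S - {v}"
        then obtain t' where "v' = g t'" "t' \<noteq> t" using S t by blast
        thus "u v' * v' (w t) = 0" using z[of t' t] by simp
      qed
      thus ?thesis using sum.remove[OF S(2) v, of "\<lambda>v'. u v' * v' (w t)"] by simp
    qed
    ultimately show "u v = 0" using nz t by simp
  qed
qed

lemma f_expand: "(f::'a::finite \<Rightarrow> complex) = (\<Sum>x\<in>UNIV. fscale (f x) (delta x))"
  by (rule ext) (simp add: fsum_apply fscale_def delta_def sum_delta_r)

lemma span_delta: "fsp.span (range (delta :: 'a::finite \<Rightarrow> _)) = UNIV"
proof -
  { fix f :: "'a \<Rightarrow> complex"
    have "f = (\<Sum>x\<in>UNIV. fscale (f x) (delta x))"
      by (rule ext) (simp add: fsum_apply fscale_def delta_def sum_delta_r)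
    also have "\<dots> \<in> fsp.span (range delta)"
      by (intro fsp.span_sum fsp.span_scale fsp.span_base) auto
    finally have "f \<in> fsp.span (range delta)" . }
  thus ?thesis by auto
qed

lemma delta_indep: "fsp.independent (range (delta :: 'a::finite \<Rightarrow> _))" "inj (delta :: 'a::finite \<Rightarrow> _)"
  by (rule indep_family[where w=id]; simp add: delta_def)+

lemma card_delta: "card (range (delta :: 'a::finite \<Rightarrow> _)) = CARD('a)"
  by (simp add: card_image[OF delta_indep(2)])

lemma span_UNIV_card:
  fixes I :: "('a::finite \<Rightarrow> complex) set"
  assumes ind: "fsp.independent I" and fin: "finite I" and c: "card I = CARD('a)"
  shows "fsp.span I = UNIV"
proof (rule ccontr)
  assume "fsp.span I \<noteq> UNIV"
  then obtain f where f: "f \<notin> fsp.span I" by auto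
  hence i2: "fsp.independent (insert f I)" using ind fsp.independent_insertI by blast
  have "insert f I \<subseteq> fsp.span (range delta)" by (simp add: span_delta)
  from fsp.independent_span_bound[OF _ i2 this]
  have "card (insert f I) \<le> CARD('a)" by (simp add: card_delta)
  moreover have "f \<notin> I" using f fsp.span_base by blast
  ultimately show False using fin c by simp
qed

lemma subspace_annih: "fsp.subspace {f. pair \<xi> f = 0}"
  unfolding fsp.subspace_def
  by (auto simp: pair_def fscale_def sum.distrib algebra_simps sum_distrib_left[symmetric])

lemma annih_span: assumes "\<And>f. f \<in> S \<Longrightarrow> pair \<xi> f = 0" "g \<in> fsp.span S"
  shows "pair \<xi> g = 0"
  using fsp.span_minimal[of S "{f. pair \<xi> f = 0}"] assms subspace_annih by blast

lemma perp_all: assumes "\<And>f. f \<in> S \<Longrightarrow> pair \<xi> f = 0" "fsp.span S = UNIV"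
  shows "\<xi> = 0"
proof (rule ext)
  fix x
  have "pair \<xi> (delta x) = 0" using annih_span[OF assms(1)] assms(2) by blast
  thus "\<xi> x = 0 x" by (simp add: pair_def delta_def sum_delta_r)
qed

interpretation fdv: finite_dimensional_vector_space "fscale :: complex \<Rightarrow> ('a::finite \<Rightarrow> complex) \<Rightarrow> _" "range delta"
  by unfold_locales (auto simp: delta_indep span_delta)


lemma annih:
  fixes S :: "('a::finite \<Rightarrow> complex) set"
  assumes dS: "fsp.dim S < CARD('a)"
  shows "\<exists>\<xi>. \<xi> \<noteq> 0 \<and> (\<forall>f\<in>S. pair \<xi> f = 0)"
proof -
  obtain Bs where Bs: "Bs \<subseteq> S" "fsp.independent Bs" "S \<subseteq> fsp.span Bs"
    by (rule fsp.maximal_independent_subset[of S])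
  obtain B where B: "Bs \<subseteq> B" "B \<subseteq> UNIV" "fsp.independent B" "UNIV \<subseteq> fsp.span B"
    by (rule fsp.maximal_independent_subset_extend[of Bs UNIV]) (use Bs(2) in auto)
  have spB: "fsp.span B = UNIV" using B(4) by auto
  have "\<not> B \<subseteq> fsp.span S"
  proof
    assume "B \<subseteq> fsp.span S"
    hence "fsp.span B \<subseteq> fsp.span S" by (metis fsp.span_minimal fsp.subspace_span)
    hence "range delta \<subseteq> fsp.span S" using spB by auto
    from fdv.independent_card_le_dim[OF this delta_indep(1)]
    have "CARD('a) \<le> fsp.dim S" by (simp add: card_delta)
    thus False using dS by simp
  qed
  then obtain v0 where v0: "v0 \<in> B" "v0 \<notin> fsp.span S" by blast
  define g where "g v = fsp.representation B v v0" for v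
  have lin: "Vector_Spaces.linear fscale (*) g"
    unfolding g_def by (rule fsp.linear_representation[OF B(3) spB])
  interpret L: Vector_Spaces.linear fscale "(*)" g by (rule lin)
  have g0: "g b = 0" if "b \<in> Bs" for b
  proof -
    have "b \<in> B" "b \<noteq> v0" using that B(1) Bs(1) v0(2) fsp.span_base by blast+
    thus ?thesis unfolding g_def using fsp.representation_basis[OF B(3), of b] by simp
  qed
  have gS: "g f = 0" if "f \<in> S" for f
    by (rule L.eq_0_on_span[OF g0]) (use that Bs(3) in auto)
  have gv0: "g v0 = 1" unfolding g_def using fsp.representation_basis[OF B(3) v0(1)] by simp
  define \<xi> where "\<xi> x = g (delta x)" for x
  have gpair: "g f = pair \<xi> f" for f
  proof -
    have "g f = g (\<Sum>x\<in>UNIV. fscale (f x) (delta x))" using f_expand[of f] by metis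
    also have "\<dots> = (\<Sum>x\<in>UNIV. f x * \<xi> x)" by (simp only: L.sum L.scale \<xi>_def)
    finally show ?thesis by (simp add: pair_def mult.commute)
  qed
  show ?thesis
  proof (intro exI conjI ballI)
    show "\<xi> \<noteq> 0" using gv0 gpair[of v0] by (auto simp: pair_def)
    show "pair \<xi> f = 0" if "f \<in> S" for f using gS[OF that] gpair by simp
  qed
qed


definition F :: "('n::finite \<times> 'n \<Rightarrow> complex) \<Rightarrow> ('n \<times> 'n \<Rightarrow> complex) \<Rightarrow> ('n \<times> 'n \<Rightarrow> complex)" where
  "F \<xi> \<eta> = (\<lambda>z. \<Sum>x\<in>UNIV. \<Sum>y\<in>UNIV. \<xi> x * \<eta> y * matmul_tensor x y z)"

lemma sum_pairs: "(\<Sum>x\<in>(UNIV::('a::finite\<times>'b::finite) set). f x) = (\<Sum>p\<in>UNIV. \<Sum>q\<in>UNIV. f (p,q))"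
  by (simp add: sum.cartesian_product UNIV_Times_UNIV[symmetric] del: UNIV_Times_UNIV)

lemma F_explicit: "F \<xi> \<eta> z = (\<Sum>q\<in>UNIV. \<xi> (snd z, q) * \<eta> (q, fst z))"
proof -
  have "F \<xi> \<eta> z = (\<Sum>p\<in>UNIV. \<Sum>q\<in>UNIV. \<Sum>q'\<in>UNIV. \<Sum>s\<in>UNIV.
     if s = fst z then (if q' = q then (if p = snd z then \<xi> (p,q) * \<eta> (q',s) else 0) else 0) else 0)"
    unfolding F_def matmul_tensor_def sum_pairs
    by (intro sum.cong refl) auto
  also have "\<dots> = (\<Sum>p\<in>UNIV. \<Sum>q\<in>UNIV. if p = snd z then \<xi> (p,q) * \<eta> (q, fst z) else 0)"
    by (simp add: sum.delta sum.delta')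
  also have "\<dots> = (\<Sum>q\<in>UNIV. \<Sum>p\<in>UNIV. if p = snd z then \<xi> (p,q) * \<eta> (q, fst z) else 0)"
    by (rule sum.swap)
  also have "\<dots> = (\<Sum>q\<in>UNIV. \<xi> (snd z, q) * \<eta> (q, fst z))"
    by (simp add: sum.delta sum.delta')
  finally show ?thesis .
qed


lemma swap5: "(\<Sum>x\<in>X. \<Sum>y\<in>Y. \<Sum>i\<in>I. \<Sum>j\<in>J. \<Sum>k\<in>K. f x y i j k) =
  (\<Sum>i\<in>I. \<Sum>j\<in>J. \<Sum>k\<in>K. \<Sum>x\<in>X. \<Sum>y\<in>Y. f x y i j k)"
proof -
  have "(\<Sum>x\<in>X. \<Sum>y\<in>Y. \<Sum>i\<in>I. \<Sum>j\<in>J. \<Sum>k\<in>K. f x y i j k) =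
        (\<Sum>x\<in>X. \<Sum>i\<in>I. \<Sum>y\<in>Y. \<Sum>j\<in>J. \<Sum>k\<in>K. f x y i j k)"
    by (rule sum.cong[OF refl], rule sum.swap)
  also have "\<dots> = (\<Sum>x\<in>X. \<Sum>i\<in>I. \<Sum>j\<in>J. \<Sum>y\<in>Y. \<Sum>k\<in>K. f x y i j k)"
    by (rule sum.cong[OF refl], rule sum.cong[OF refl], rule sum.swap)
  also have "\<dots> = (\<Sum>x\<in>X. \<Sum>i\<in>I. \<Sum>j\<in>J. \<Sum>k\<in>K. \<Sum>y\<in>Y. f x y i j k)"
    by (rule sum.cong[OF refl], rule sum.cong[OF refl], rule sum.cong[OF refl], rule sum.swap)
  also have "\<dots> = (\<Sum>i\<in>I. \<Sum>x\<in>X. \<Sum>j\<in>J. \<Sum>k\<in>K. \<Sum>y\<in>Y. f x y i j k)"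
    by (rule sum.swap)
  also have "\<dots> = (\<Sum>i\<in>I. \<Sum>j\<in>J. \<Sum>x\<in>X. \<Sum>k\<in>K. \<Sum>y\<in>Y. f x y i j k)"
    by (rule sum.cong[OF refl], rule sum.swap)
  also have "\<dots> = (\<Sum>i\<in>I. \<Sum>j\<in>J. \<Sum>k\<in>K. \<Sum>x\<in>X. \<Sum>y\<in>Y. f x y i j k)"
    by (rule sum.cong[OF refl], rule sum.cong[OF refl], rule sum.swap)
  finally show ?thesis .
qed

lemma if_distrib_sum: "(\<Sum>x\<in>X. \<Sum>y\<in>Y. if P then f x y else 0) = (if P then (\<Sum>x\<in>X. \<Sum>y\<in>Y. f x y) else (0::complex))"
  by simp

lemma fscale_0[simp]: "fscale 0 f = 0" by (simp add: fscale_def fun_eq_iff)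

lemma mult_if0: "(c::complex) * (if P then x else 0) = (if P then c * x else 0)" by simp

locale bud =
  fixes a b c :: "nat \<Rightarrow> ('n::finite \<times> 'n) \<Rightarrow> complex" and r :: nat
  assumes decomp: "\<And>x y z. matmul_tensor x y z = (\<Sum>i=1..r. \<Sum>j=1..r. \<Sum>k=1..r.
           if i + j + k \<le> r + 2 then a i x * b j y * c k z else 0)"
begin

lemma F_decomp: "F \<xi> \<eta> = (\<Sum>i=1..r. \<Sum>j=1..r. \<Sum>k=1..r.
   if i + j + k \<le> r + 2 then fscale (pair \<xi> (a i) * pair \<eta> (b j)) (c k) else 0)"
proof (rule ext)
  fix z
  have "F \<xi> \<eta> z = (\<Sum>x\<in>UNIV. \<Sum>y\<in>UNIV. \<Sum>i=1..r. \<Sum>j=1..r. \<Sum>k=1..r.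
     if i + j + k \<le> r + 2 then \<xi> x * a i x * (\<eta> y * b j y) * c k z else 0)"
    unfolding F_def decomp by (simp add: sum_distrib_left mult_if0, intro sum.cong refl, simp add: mult_ac)
  also have "\<dots> = (\<Sum>i=1..r. \<Sum>j=1..r. \<Sum>k=1..r. \<Sum>x\<in>UNIV. \<Sum>y\<in>UNIV.
     if i + j + k \<le> r + 2 then \<xi> x * a i x * (\<eta> y * b j y) * c k z else 0)"
    by (rule swap5)
  also have "\<dots> = (\<Sum>i=1..r. \<Sum>j=1..r. \<Sum>k=1..r.
     if i + j + k \<le> r + 2 then pair \<xi> (a i) * pair \<eta> (b j) * c k z else 0)"
    by (intro sum.cong refl) (simp only: pair_def sum_product, simp only: sum_distrib_right if_distrib_sum mult.assoc)
  also have "\<dots> = (\<Sum>i=1..r. \<Sum>j=1..r. \<Sum>k=1..r.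
   if i + j + k \<le> r + 2 then fscale (pair \<xi> (a i) * pair \<eta> (b j)) (c k) else 0) z"
    by (simp add: fsum_apply fscale_def if_distrib[of "\<lambda>f. f z"] cong: if_cong)
  finally show "F \<xi> \<eta> z = (\<Sum>i=1..r. \<Sum>j=1..r. \<Sum>k=1..r.
   if i + j + k \<le> r + 2 then fscale (pair \<xi> (a i) * pair \<eta> (b j)) (c k) else 0) z" .
qed

lemma F_in_span:
  assumes h: "\<And>i j k. i \<in> {1..r} \<Longrightarrow> j \<in> {1..r} \<Longrightarrow> k \<in> {1..r} \<Longrightarrow> i + j + k \<le> r + 2
      \<Longrightarrow> K0 \<le> k \<Longrightarrow> pair \<xi> (a i) * pair \<eta> (b j) = 0"
  shows "F \<xi> \<eta> \<in> fsp.span (c ` {1..<K0})"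
  unfolding F_decomp
proof (intro fsp.span_sum)
  fix i j k assume ijk: "i \<in> {1..r}" "j \<in> {1..r}" "k \<in> {1..r}"
  show "(if i + j + k \<le> r + 2 then fscale (pair \<xi> (a i) * pair \<eta> (b j)) (c k) else 0)
        \<in> fsp.span (c ` {1..<K0})"
  proof (cases "i + j + k \<le> r + 2 \<and> K0 \<le> k")
    case True
    then show ?thesis using h[OF ijk] by (simp add: fsp.span_zero del: mult_eq_0_iff)
  next
    case False
    then show ?thesis using ijk
      by (auto intro!: fsp.span_zero fsp.span_scale[OF fsp.span_base])
  qed
qed

lemma F_lead:
  assumes t: "i0 \<in> {1..r}" "j0 \<in> {1..r}" "k0 \<in> {1..r}" "i0 + j0 + k0 \<le> r + 2"
    and h: "\<And>i j k. i \<in> {1..r} \<Longrightarrow> j \<in> {1..r} \<Longrightarrow> k \<in> {1..r} \<Longrightarrow> i + j + k \<le> r + 2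
      \<Longrightarrow> (i, j, k) \<noteq> (i0, j0, k0) \<Longrightarrow> k0 \<le> k \<Longrightarrow> pair \<xi> (a i) * pair \<eta> (b j) = 0"
  shows "F \<xi> \<eta> - fscale (pair \<xi> (a i0) * pair \<eta> (b j0)) (c k0) \<in> fsp.span (c ` {1..<k0})"
proof -
  define X where "X = fscale (pair \<xi> (a i0) * pair \<eta> (b j0)) (c k0)"
  define T where "T i j k = (if i + j + k \<le> r + 2 then fscale (pair \<xi> (a i) * pair \<eta> (b j)) (c k) else 0)" for i j k
  have X: "X = (\<Sum>i=1..r. \<Sum>j=1..r. \<Sum>k=1..r. if k = k0 then (if j = j0 then (if i = i0 then X else 0) else 0) else 0)"
    using t by (simp add: sum.delta sum.delta')
  have "F \<xi> \<eta> - X = (\<Sum>i=1..r. \<Sum>j=1..r. \<Sum>k=1..r. T i j k - (if k = k0 then (if j = j0 then (if i = i0 then X else 0) else 0) else 0))"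
    by (subst X) (simp add: F_decomp T_def sum_subtractf)
  also have "\<dots> \<in> fsp.span (c ` {1..<k0})"
  proof (intro fsp.span_sum)
    fix i j k assume ijk: "i \<in> {1..r}" "j \<in> {1..r}" "k \<in> {1..r}"
    show "T i j k - (if k = k0 then (if j = j0 then (if i = i0 then X else 0) else 0) else 0) \<in> fsp.span (c ` {1..<k0})"
    proof (cases "(i, j, k) = (i0, j0, k0)")
      case True
      then show ?thesis using t by (simp add: T_def X_def fsp.span_zero)
    next
      case False
      hence "T i j k - (if k = k0 then (if j = j0 then (if i = i0 then X else 0) else 0) else 0) = T i j k" by auto
      moreover have "T i j k \<in> fsp.span (c ` {1..<k0})"
      proof (cases "i + j + k \<le> r + 2 \<and> k0 \<le> k")
        case True
        then show ?thesis using h[OF ijk _ False] by (simp add: T_def fsp.span_zero del: mult_eq_0_iff)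
      next
        case False
        then show ?thesis using ijk
          by (auto simp: T_def intro!: fsp.span_zero fsp.span_scale[OF fsp.span_base])
      qed
      ultimately show ?thesis by simp
    qed
  qed
  finally show ?thesis unfolding X_def .
qed

lemma core2:
  assumes n2: "CARD('n) \<ge> 2" and rdef: "r = 2 * CARD('n)^2 - 2"
  shows "fsp.dim (a ` {1..2 * CARD('n)^2 - CARD('n) - 1}) \<ge> CARD('n)^2"
proof (rule ccontr)
  define n where "n = CARD('n)"
  define m where "m = 2 * CARD('n)^2 - CARD('n) - 1"
  have N: "CARD('n)^2 = n * n" "n \<ge> 2" using n2 by (simp_all add: n_def power2_eq_square)
  have nn: "n * n \<ge> 2 * n" using N(2) by simp
  assume "\<not> fsp.dim (a ` {1..2 * CARD('n)^2 - CARD('n) - 1}) \<ge> CARD('n)^2"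
  hence "fsp.dim (a ` {1..m}) < CARD('n \<times> 'n)" by (simp add: m_def power2_eq_square)
  then obtain \<xi> where \<xi>: "\<xi> \<noteq> 0" "\<And>i. i \<in> {1..m} \<Longrightarrow> pair \<xi> (a i) = 0"
    using annih by blast
  then obtain p0 q0 where x0: "\<xi> (p0, q0) \<noteq> 0" by (metis ext prod.collapse zero_fun_def)
  define g where "g t = F \<xi> (delta (q0, t))" for t
  have gexp: "g t z = \<xi> (snd z, q0) * (if fst z = t then 1 else 0)" for t z
    unfolding g_def F_explicit delta_def by (simp add: sum.delta sum.delta' if_distrib[of "\<lambda>x. _ * x"] cong: if_cong)
  have gin: "g t \<in> fsp.span (c ` {1..<n})" for t
    unfolding g_def
  proof (rule F_in_span)
    fix i j k assume ijk: "i \<in> {1..r}" "j \<in> {1..r}" "k \<in> {1..r}" "i + j + k \<le> r + 2" "n \<le> k"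
    have "i \<le> m" using ijk nn N unfolding rdef m_def n_def by simp
    thus "pair \<xi> (a i) * pair (delta (q0, t)) (b j) = 0" using \<xi>(2) ijk by simp
  qed
  have ind: "fsp.independent (range g)" "inj g"
    by (rule indep_family[where w="\<lambda>t. (t, p0)"]; simp add: gexp x0)+
  have "finite (range g) \<and> card (range g) \<le> card (c ` {1..<n})"
    by (rule fsp.independent_span_bound) (use gin ind in auto)
  moreover have "card (c ` {1..<n}) \<le> n - 1" using card_image_le[of "{1..<n}" c] by simp
  moreover have "card (range g) = n" by (simp add: card_image[OF ind(2)] n_def)
  ultimately show False using N by simp
qed

lemma F_add: "F (\<lambda>x. \<zeta>1 x + \<zeta>2 x) \<eta> = F \<zeta>1 \<eta> + F \<zeta>2 \<eta>"
  by (rule ext) (simp add: F_explicit algebra_simps sum.distrib)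

lemma F_scale: "F (\<lambda>x. s * \<zeta> x) \<eta> = fscale s (F \<zeta> \<eta>)"
  by (rule ext) (simp add: F_explicit fscale_def sum_distrib_left mult.assoc)

lemma F_zero: "F (\<lambda>x. 0) \<eta> = 0"
  by (rule ext) (simp add: F_explicit)

lemma subspace_Im: "fsp.subspace (range (\<lambda>\<zeta>. F \<zeta> \<eta>))"
  unfolding fsp.subspace_def
proof (intro conjI ballI allI)
  show "0 \<in> range (\<lambda>\<zeta>. F \<zeta> \<eta>)" unfolding image_iff
    by (rule bexI[of _ "\<lambda>x. 0"]) (simp_all add: F_zero)
  fix x y s assume "x \<in> range (\<lambda>\<zeta>. F \<zeta> \<eta>)" "y \<in> range (\<lambda>\<zeta>. F \<zeta> \<eta>)"
  then obtain z1 z2 where xy: "x = F z1 \<eta>" "y = F z2 \<eta>" by blast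
  show "x + y \<in> range (\<lambda>\<zeta>. F \<zeta> \<eta>)" unfolding image_iff
    by (rule bexI[of _ "\<lambda>x. z1 x + z2 x"]) (simp_all add: xy F_add)
  show "fscale s x \<in> range (\<lambda>\<zeta>. F \<zeta> \<eta>)" unfolding image_iff
    by (rule bexI[of _ "\<lambda>x. s * z1 x"]) (simp_all add: xy F_scale)
qed

lemma card_N: "CARD('n \<times> 'n) = CARD('n)^2" by (simp add: power2_eq_square)

lemma annih_range:
  assumes "card I < CARD('n)^2" "finite I"
  shows "\<exists>\<xi>. \<xi> \<noteq> 0 \<and> (\<forall>i\<in>I. pair \<xi> (f i :: 'n \<times> 'n \<Rightarrow> complex) = 0)"
proof -
  have "fsp.dim (f ` I) \<le> card (f ` I)" by (rule fsp.dim_le_card) (auto intro: fsp.span_base assms)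
  also have "\<dots> \<le> card I" by (rule card_image_le[OF assms(2)])
  finally have "fsp.dim (f ` I) < CARD('n \<times> 'n)" using assms card_N by simp
  from annih[OF this] show ?thesis by blast
qed

lemma span_full:
  assumes "lin_indep_family {1..CARD('n)^2} (f :: nat \<Rightarrow> 'n \<times> 'n \<Rightarrow> complex)"
  shows "fsp.span (f ` {1..CARD('n)^2}) = UNIV"
  using assms unfolding lin_indep_family_def
  by (intro span_UNIV_card) (auto simp: card_image power2_eq_square)

lemma core1:
  assumes n2: "CARD('n) \<ge> 2" and rdef: "r = 2 * CARD('n)^2 - 2"
    and LA: "lin_indep_family {1..CARD('n)^2} a" and LB: "lin_indep_family {1..CARD('n)^2} b"
  shows False
proof -
  define N where "N = CARD('n)^2"
  have N4: "N \<ge> 4" using n2 power_mono[of 2 "CARD('n)" 2] unfolding N_def by simp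
  have rN: "r = 2 * N - 2" using rdef N_def by simp
  obtain \<xi> where \<xi>: "\<xi> \<noteq> 0" "\<And>i. i \<in> {1..N-1} \<Longrightarrow> pair \<xi> (a i) = 0"
    using annih_range[of "{1..N-1}" a] N4 unfolding N_def by auto
  obtain \<beta> where \<beta>: "\<beta> \<noteq> 0" "\<And>j. j \<in> {1..N-1} \<Longrightarrow> pair \<beta> (b j) = 0"
    using annih_range[of "{1..N-1}" b] N4 unfolding N_def by auto
  have bN: "pair \<beta> (b N) \<noteq> 0"
  proof
    assume "pair \<beta> (b N) = 0"
    have "pair \<beta> f = 0" if fb: "f \<in> b ` {1..N}" for f
    proof -
      obtain i' where "i' \<in> {1..N}" "f = b i'" using fb by blast
      thus ?thesis using \<beta>(2)[of i'] \<open>pair \<beta> (b N) = 0\<close> by (cases "i' = N") auto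
    qed
    from perp_all[OF this] span_full[OF LB] \<beta>(1) show False unfolding N_def by simp
  qed
  have dual_ex: "\<exists>\<zeta>. \<forall>i'\<in>{1..N}. pair \<zeta> (a i') = (if i' = i then 1 else 0)" if i: "i \<in> {1..N}" for i
  proof -
    have "card ({1..N} - {i}) < N" using i N4 by simp
    then obtain \<zeta> where \<zeta>: "\<zeta> \<noteq> 0" "\<And>i'. i' \<in> {1..N} - {i} \<Longrightarrow> pair \<zeta> (a i') = 0"
      using annih_range[of "{1..N} - {i}" a] unfolding N_def by auto
    have l: "pair \<zeta> (a i) \<noteq> 0"
    proof
      assume "pair \<zeta> (a i) = 0"
      have "pair \<zeta> f = 0" if fa: "f \<in> a ` {1..N}" for f
      proof -
        obtain i' where "i' \<in> {1..N}" "f = a i'" using fa by blast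
        thus ?thesis using \<zeta>(2)[of i'] \<open>pair \<zeta> (a i) = 0\<close> by (cases "i' = i") auto
      qed
      from perp_all[OF this] span_full[OF LA] \<zeta>(1) show False unfolding N_def by simp
    qed
    show ?thesis
    proof (intro exI ballI)
      fix i' assume "i' \<in> {1..N}"
      thus "pair (\<lambda>x. \<zeta> x / pair \<zeta> (a i)) (a i') = (if i' = i then 1 else 0)"
        using l \<zeta>(2)[of i'] by (auto simp: pair_def sum_divide_distrib[symmetric])
    qed
  qed
  hence "\<forall>i\<in>{1..N}. \<exists>\<zeta>. \<forall>i'\<in>{1..N}. pair \<zeta> (a i') = (if i' = i then 1 else 0)" by blast
  then obtain dual where dual0: "\<forall>i\<in>{1..N}. \<forall>i'\<in>{1..N}. pair (dual i) (a i') = (if i' = i then 1 else 0)"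
    by (rule bchoice[THEN exE]) blast
  have dual: "\<And>i i'. i \<in> {1..N} \<Longrightarrow> i' \<in> {1..N} \<Longrightarrow> pair (dual i) (a i') = (if i' = i then 1 else 0)"
    using dual0 by blast
  define Im where "Im = range (\<lambda>\<zeta>. F \<zeta> \<beta>)"
  have subIm: "fsp.subspace Im" unfolding Im_def by (rule subspace_Im)
  have ck: "c k \<in> Im" if "k \<in> {1..N-1}" for k
    using that
  proof (induction k rule: less_induct)
    case (less k)
    have sp: "fsp.span (c ` {1..<k}) \<subseteq> Im"
      by (rule fsp.span_minimal[OF _ subIm]) (use less in auto)
    have "F (dual (N-k)) \<beta> - fscale (pair (dual (N-k)) (a (N-k)) * pair \<beta> (b N)) (c k) \<in> fsp.span (c ` {1..<k})"
    proof (rule F_lead)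
      show "N - k \<in> {1..r}" "N \<in> {1..r}" "k \<in> {1..r}" "N - k + N + k \<le> r + 2"
        using less.prems N4 rN by auto
      fix i j k' assume ijk: "i \<in> {1..r}" "j \<in> {1..r}" "k' \<in> {1..r}" "i + j + k' \<le> r + 2"
        "(i, j, k') \<noteq> (N - k, N, k)" "k \<le> k'"
      show "pair (dual (N - k)) (a i) * pair \<beta> (b j) = 0"
      proof (cases "j \<le> N - 1")
        case True thus ?thesis using \<beta>(2) ijk by simp
      next
        case False
        hence "i \<le> N" using ijk rN by auto
        moreover have "i \<noteq> N - k" using ijk False rN less.prems by auto
        moreover have "N - k \<ge> 1" using less.prems by auto
        ultimately show ?thesis using dual[of "N-k" i] ijk by simp
      qed
    qed
    hence "F (dual (N-k)) \<beta> - fscale (pair \<beta> (b N)) (c k) \<in> Im"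
      using sp dual[of "N-k" "N-k"] less.prems by auto
    moreover have "F (dual (N-k)) \<beta> \<in> Im" unfolding Im_def image_iff by (intro bexI[of _ "dual (N-k)"]) simp_all
    ultimately have "F (dual (N-k)) \<beta> - (F (dual (N-k)) \<beta> - fscale (pair \<beta> (b N)) (c k)) \<in> Im"
      using fsp.subspace_diff[OF subIm] by blast
    hence "fscale (pair \<beta> (b N)) (c k) \<in> Im" by simp
    hence "fscale (1 / pair \<beta> (b N)) (fscale (pair \<beta> (b N)) (c k)) \<in> Im"
      using fsp.subspace_scale[OF subIm] by blast
    thus ?case using bN by (simp add: fscale_def)
  qed
  have VIm: "fsp.span (c ` {1..<N}) \<subseteq> Im"
    by (rule fsp.span_minimal[OF _ subIm]) (use ck in auto)
  have ImV: "F \<zeta> \<beta> \<in> fsp.span (c ` {1..<N})" for \<zeta>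
  proof (rule F_in_span)
    fix i j k assume ijk: "i \<in> {1..r}" "j \<in> {1..r}" "k \<in> {1..r}" "i + j + k \<le> r + 2" "N \<le> k"
    thus "pair \<zeta> (a i) * pair \<beta> (b j) = 0" using \<beta>(2)[of j] rN by auto
  qed
  have xiV: "F \<xi> \<eta> \<in> fsp.span (c ` {1..<N})" for \<eta>
  proof (rule F_in_span)
    fix i j k assume ijk: "i \<in> {1..r}" "j \<in> {1..r}" "k \<in> {1..r}" "i + j + k \<le> r + 2" "N \<le> k"
    thus "pair \<xi> (a i) * pair \<eta> (b j) = 0" using \<xi>(2)[of i] rN by auto
  qed
  obtain p0 q0 where x0: "\<xi> (p0, q0) \<noteq> 0" using \<xi>(1) by (metis ext prod.collapse zero_fun_def)
  have "\<exists>\<zeta>. F \<zeta> \<beta> = F \<xi> (delta (q0, t))" for t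
  proof -
    have "F \<xi> (delta (q0, t)) \<in> range (\<lambda>\<zeta>. F \<zeta> \<beta>)" using VIm xiV[of "delta (q0, t)"] unfolding Im_def by blast
    thus ?thesis unfolding image_iff by (metis UNIV_I)
  qed
  then obtain Z where Z: "\<And>t. F (Z t) \<beta> = F \<xi> (delta (q0, t))" by metis
  have Zexp: "(\<Sum>q\<in>UNIV. Z t (p, q) * \<beta> (q, s)) = \<xi> (p, q0) * (if s = t then 1 else 0)" for t p s
    using fun_cong[OF Z[of t], of "(s, p)"]
    unfolding F_explicit delta_def by (simp add: sum.delta sum.delta' if_distrib[of "\<lambda>x. _ * x"] cong: if_cong)
  have dIm: "delta z0 \<in> Im" for z0
  proof -
    obtain s0 p1 where z0: "z0 = (s0, p1)" by fastforce
    define \<zeta> where "\<zeta> x = (if fst x = p1 then Z s0 (p0, snd x) / \<xi> (p0, q0) else 0)" for x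
    have "F \<zeta> \<beta> = delta z0"
    proof (rule ext)
      fix z
      have "F \<zeta> \<beta> z = (if snd z = p1 then (\<Sum>q\<in>UNIV. Z s0 (p0, q) * \<beta> (q, fst z)) / \<xi> (p0, q0) else 0)"
        unfolding F_explicit \<zeta>_def by (simp add: sum_divide_distrib)
      also have "\<dots> = delta z0 z" using x0 unfolding Zexp z0 delta_def by (cases z) auto
      finally show "F \<zeta> \<beta> z = delta z0 z" .
    qed
    thus ?thesis unfolding Im_def image_iff by (intro bexI[of _ \<zeta>]) simp_all
  qed
  have "range delta \<subseteq> fsp.span (c ` {1..<N})"
  proof
    fix f assume "f \<in> range (delta :: 'n \<times> 'n \<Rightarrow> _)"
    then obtain z0 where "f = delta z0" by blast
    moreover obtain \<zeta> where "delta z0 = F \<zeta> \<beta>" using dIm[of z0] unfolding Im_def by blast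
    ultimately show "f \<in> fsp.span (c ` {1..<N})" using ImV by simp
  qed
  from fsp.independent_span_bound[OF _ delta_indep(1) this]
  have "card (range (delta :: 'n \<times> 'n \<Rightarrow> _)) \<le> card (c ` {1..<N})" by simp
  moreover have "card (c ` {1..<N}) \<le> N - 1" using card_image_le[of "{1..<N}" c] by simp
  moreover have "card (range (delta :: 'n \<times> 'n \<Rightarrow> _)) = N" by (simp add: card_delta N_def power2_eq_square)
  ultimately show False using N4 by simp
qed

end


lemma matmul_rot: "matmul_tensor x y z = matmul_tensor y z x"
  unfolding matmul_tensor_def by auto

lemma bud_rot:
  fixes a b c :: "nat \<Rightarrow> ('n::finite \<times> 'n) \<Rightarrow> complex"
  assumes "bud a b c r" shows "bud b c a r"
proof
  fix x y z :: "'n \<times> 'n"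
  have "matmul_tensor x y z = matmul_tensor z x y" by (simp add: matmul_rot)
  also have "\<dots> = (\<Sum>i=1..r. \<Sum>j=1..r. \<Sum>k=1..r. if i + j + k \<le> r + 2 then a i z * b j x * c k y else 0)"
    by (rule bud.decomp[OF assms])
  also have "\<dots> = (\<Sum>j=1..r. \<Sum>i=1..r. \<Sum>k=1..r. if i + j + k \<le> r + 2 then a i z * b j x * c k y else 0)"
    by (rule sum.swap)
  also have "\<dots> = (\<Sum>j=1..r. \<Sum>k=1..r. \<Sum>i=1..r. if i + j + k \<le> r + 2 then a i z * b j x * c k y else 0)"
    by (rule sum.cong[OF refl], rule sum.swap)
  also have "\<dots> = (\<Sum>i=1..r. \<Sum>j=1..r. \<Sum>k=1..r. if i + j + k \<le> r + 2 then b i x * c j y * a k z else 0)"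
    by (intro sum.cong refl) (simp add: mult_ac add_ac)
  finally show "matmul_tensor x y z = (\<Sum>i=1..r. \<Sum>j=1..r. \<Sum>k=1..r. if i + j + k \<le> r + 2 then b i x * c j y * a k z else 0)" .
qed

theorem proposition4p5:
  fixes a b c :: "nat \<Rightarrow> ('n::finite \<times> 'n) \<Rightarrow> complex"
    and r :: nat
  assumes n2: "CARD('n) \<ge> 2"
    and r_def: "r = 2 * CARD('n)^2 - 2"
    and decomp: "\<And>x y z. matmul_tensor x y z =
        (\<Sum>i=1..r. \<Sum>j=1..r. \<Sum>k=1..r.
           if i + j + k \<le> r + 2 then a i x * b j y * c k z else 0)"
    and K: "in_K (a 1) (b 1) (c 1)"
  shows "\<not> (lin_indep_family {1..CARD('n)^2} a \<and> lin_indep_family {1..CARD('n)^2} b)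
       \<and> \<not> (lin_indep_family {1..CARD('n)^2} a \<and> lin_indep_family {1..CARD('n)^2} c)
       \<and> \<not> (lin_indep_family {1..CARD('n)^2} b \<and> lin_indep_family {1..CARD('n)^2} c)
       \<and> fsp.dim (a ` {1..2 * CARD('n)^2 - CARD('n) - 1}) \<ge> CARD('n)^2
       \<and> fsp.dim (b ` {1..2 * CARD('n)^2 - CARD('n) - 1}) \<ge> CARD('n)^2
       \<and> fsp.dim (c ` {1..2 * CARD('n)^2 - CARD('n) - 1}) \<ge> CARD('n)^2"
proof -
  have B1: "bud a b c r" by unfold_locales (rule decomp)
  have B2: "bud b c a r" by (rule bud_rot[OF B1])
  have B3: "bud c a b r" by (rule bud_rot[OF B2])
  show ?thesis
    using bud.core1[OF B1 n2 r_def] bud.core1[OF B2 n2 r_def] bud.core1[OF B3 n2 r_def]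
      bud.core2[OF B1 n2 r_def] bud.core2[OF B2 n2 r_def] bud.core2[OF B3 n2 r_def]
    by blast
qed

end
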